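(* There is an injective ring homomorphism $\Delta\colon\Lambda\to\Gamma$ such that the ring embeddings $K\to\Lambda$ and $\Lambda\to\Gamma$ compose to the ring embedding $K\to\Gamma$.
   Context: $K$ is a division ring, $(Q,Z)$ a gentle pair (locally gentle with finitely many admissible paths), $\boldsymbol{\sigma}\colon Q_1\to\operatorname{Aut}(K)$, $a\mapsto\sigma_a$. The semilinear path algebra $K_{\boldsymbol{\sigma}}Q$ is the $K$-ring generated by trivial paths $e_v$ and arrows $a$ subject to $\sum e_v=1$, $e_v^2=e_v$, $e_ue_v=0$ ($u\neq v$), $e_v\lambda=\lambda e_v$, $e_{h(a)}a=a=ae_{t(a)}$, $a\lambda=\sigma_a(\lambda)a$. Let $\Lambda=K_{\boldsymbol{\sigma}}Q/\langle Z\rangle$. Let $Q'=Q^{\mathrm{cut}}(Z)$ be the Zembyk excision (denoted in the paper by $Q$ with a scissors superscript): vertices $v'$ for non-relational $v$ and two distinct vertices $v(\sharp),v(\flat)$ for each relational $v$ (i.e. $v=t(b)=h(a)$ for some $ba\in Z$), arrows $a'$ for $a\in Q_1$, with heads/tails reattached at relational $v$ so that for $h(a)=v=t(b)$, $b'a'$ is a path in $Q'$ exactly when $ba\notin Z$. Let $\Gamma=K_{\boldsymbol{\sigma}'}Q'$ with $\sigma'_{a'}=\sigma_a$. (The map is induced by $e_v\mapsto e_{v'}$ for non-relational $v$, $e_u\mapsto e_{u(\sharp)}+e_{u(\flat)}$ for relational $u$, $a\mapsto a'$.) *)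

theory Defs
  imports "HOL-Algebra.QuotRing"
begin

text \<open>A path is a pair (v, as): as = [a_n, ..., a_1] is the list of arrows of the
path a_n ... a_1 (written right to left, so t(a_(i+1)) = h(a_i)), and v is its
head vertex; the trivial path e_v is (v, []).\<close>

definition qpath :: "'v set \<Rightarrow> 'a set \<Rightarrow> ('a \<Rightarrow> 'v) \<Rightarrow> ('a \<Rightarrow> 'v) \<Rightarrow> 'v \<times> 'a list \<Rightarrow> bool" where
  "qpath V A h t p = (set (snd p) \<subseteq> A \<and>
     (if snd p = [] then fst p \<in> V else fst p = h (hd (snd p))) \<and>
     (\<forall>i. Suc i < length (snd p) \<longrightarrow> t (snd p ! i) = h (snd p ! Suc i)))"

definition ptail :: "('a \<Rightarrow> 'v) \<Rightarrow> 'v \<times> 'a list \<Rightarrow> 'v" where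
  "ptail t p = (if snd p = [] then fst p else t (last (snd p)))"

text \<open>Concatenation pq (first q, then p), defined when ptail p = head of q.\<close>
definition pconcat :: "'v \<times> 'a list \<Rightarrow> 'v \<times> 'a list \<Rightarrow> 'v \<times> 'a list" where
  "pconcat p q = (fst p, snd p @ snd q)"

text \<open>sigma_p = sigma_(a_n) o ... o sigma_(a_1) for p = a_n ... a_1, so that p lambda = sigma_p(lambda) p.\<close>
definition ptwist :: "('a \<Rightarrow> 'k \<Rightarrow> 'k) \<Rightarrow> 'a list \<Rightarrow> 'k \<Rightarrow> 'k" where
  "ptwist \<sigma> as = foldr (\<lambda>a f. \<sigma> a \<circ> f) as id"

text \<open>The semilinear path algebra K_sigma Q: finite left K-linear combinations
sum lambda_p p of paths, with (lambda p)(mu q) = lambda sigma_p(mu) pq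
(and 0 if pq is not a path).\<close>
definition semilinear_path_algebra ::
  "'v set \<Rightarrow> 'a set \<Rightarrow> ('a \<Rightarrow> 'v) \<Rightarrow> ('a \<Rightarrow> 'v) \<Rightarrow> ('a \<Rightarrow> 'k::division_ring \<Rightarrow> 'k)
     \<Rightarrow> ('v \<times> 'a list \<Rightarrow> 'k) ring" where
  "semilinear_path_algebra V A h t \<sigma> =
    \<lparr>carrier = {f. (\<forall>p. f p \<noteq> 0 \<longrightarrow> qpath V A h t p) \<and> finite {p. f p \<noteq> 0}},
     mult = (\<lambda>f g r. \<Sum>(p, q) \<in> {(p, q). qpath V A h t p \<and> qpath V A h t q \<and> f p \<noteq> 0 \<and> g q \<noteq> 0
                                   \<and> ptail t p = fst q \<and> pconcat p q = r}.
                        f p * ptwist \<sigma> (snd p) (g q)),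
     one = (\<lambda>p. if snd p = [] \<and> fst p \<in> V then 1 else 0),
     zero = (\<lambda>p. 0),
     add = (\<lambda>f g p. f p + g p)\<rparr>"

definition scalar_elem :: "'v set \<Rightarrow> 'k::division_ring \<Rightarrow> ('v \<times> 'a list \<Rightarrow> 'k)" where
  "scalar_elem V c = (\<lambda>p. if snd p = [] \<and> fst p \<in> V then c else 0)"

definition path_elem :: "'v \<times> 'a list \<Rightarrow> ('v \<times> 'a list \<Rightarrow> 'k::division_ring)" where
  "path_elem p = (\<lambda>q. if q = p then 1 else 0)"

text \<open>A relation (b, a) \<in> Z stands for the length-two path ba (so h a = t b).\<close>
definition relation_elems :: "('a \<Rightarrow> 'v) \<Rightarrow> ('a \<times> 'a) set \<Rightarrow> ('v \<times> 'a list \<Rightarrow> 'k::division_ring) set" where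
  "relation_elems h Z = {path_elem (h b, [b, a]) | b a. (b, a) \<in> Z}"

definition bound_semilinear_algebra ::
  "'v set \<Rightarrow> 'a set \<Rightarrow> ('a \<Rightarrow> 'v) \<Rightarrow> ('a \<Rightarrow> 'v) \<Rightarrow> ('a \<Rightarrow> 'k::division_ring \<Rightarrow> 'k) \<Rightarrow> ('a \<times> 'a) set
     \<Rightarrow> ('v \<times> 'a list \<Rightarrow> 'k) set ring" where
  "bound_semilinear_algebra V A h t \<sigma> Z =
     semilinear_path_algebra V A h t \<sigma> Quot genideal (semilinear_path_algebra V A h t \<sigma>) (relation_elems h Z)"

definition bound_scalar ::
  "'v set \<Rightarrow> 'a set \<Rightarrow> ('a \<Rightarrow> 'v) \<Rightarrow> ('a \<Rightarrow> 'v) \<Rightarrow> ('a \<Rightarrow> 'k::division_ring \<Rightarrow> 'k) \<Rightarrow> ('a \<times> 'a) set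
     \<Rightarrow> 'k \<Rightarrow> ('v \<times> 'a list \<Rightarrow> 'k) set" where
  "bound_scalar V A h t \<sigma> Z c =
     a_r_coset (semilinear_path_algebra V A h t \<sigma>)
       (genideal (semilinear_path_algebra V A h t \<sigma>) (relation_elems h Z)) (scalar_elem V c)"

definition ring_automorphism :: "('k::division_ring \<Rightarrow> 'k) \<Rightarrow> bool" where
  "ring_automorphism f = (bij f \<and> (\<forall>x y. f (x + y) = f x + f y) \<and> (\<forall>x y. f (x * y) = f x * f y) \<and> f 1 = 1)"

definition at_most_one :: "('b \<Rightarrow> bool) \<Rightarrow> bool" where
  "at_most_one P = (\<forall>x y. P x \<and> P y \<longrightarrow> x = y)"

definition locally_gentle :: "'v set \<Rightarrow> 'a set \<Rightarrow> ('a \<Rightarrow> 'v) \<Rightarrow> ('a \<Rightarrow> 'v) \<Rightarrow> ('a \<times> 'a) set \<Rightarrow> bool" where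
  "locally_gentle V A h t Z =
    ((\<forall>a\<in>A. h a \<in> V \<and> t a \<in> V) \<and>
     (\<forall>v\<in>V. finite {a\<in>A. h a = v} \<and> card {a\<in>A. h a = v} \<le> 2 \<and>
             finite {a\<in>A. t a = v} \<and> card {a\<in>A. t a = v} \<le> 2) \<and>
     Z \<subseteq> {(b, a). a \<in> A \<and> b \<in> A \<and> h a = t b} \<and>
     (\<forall>a\<in>A. at_most_one (\<lambda>b. b \<in> A \<and> t b = h a \<and> (b, a) \<in> Z) \<and>
             at_most_one (\<lambda>b. b \<in> A \<and> t b = h a \<and> (b, a) \<notin> Z)) \<and>
     (\<forall>b\<in>A. at_most_one (\<lambda>a. a \<in> A \<and> t b = h a \<and> (b, a) \<in> Z) \<and>
             at_most_one (\<lambda>a. a \<in> A \<and> t b = h a \<and> (b, a) \<notin> Z)))"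

definition admissible_path :: "'v set \<Rightarrow> 'a set \<Rightarrow> ('a \<Rightarrow> 'v) \<Rightarrow> ('a \<Rightarrow> 'v) \<Rightarrow> ('a \<times> 'a) set \<Rightarrow> 'v \<times> 'a list \<Rightarrow> bool" where
  "admissible_path V A h t Z p = (qpath V A h t p \<and>
     (\<forall>i. Suc i < length (snd p) \<longrightarrow> (snd p ! i, snd p ! Suc i) \<notin> Z))"

definition gentle_pair :: "'v set \<Rightarrow> 'a set \<Rightarrow> ('a \<Rightarrow> 'v) \<Rightarrow> ('a \<Rightarrow> 'v) \<Rightarrow> ('a \<times> 'a) set \<Rightarrow> bool" where
  "gentle_pair V A h t Z = (locally_gentle V A h t Z \<and> finite {p. admissible_path V A h t Z p})"

definition relational :: "('a \<Rightarrow> 'v) \<Rightarrow> ('a \<Rightarrow> 'v) \<Rightarrow> ('a \<times> 'a) set \<Rightarrow> 'v \<Rightarrow> bool" where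
  "relational h t Z v = (\<exists>b a. (b, a) \<in> Z \<and> h a = v \<and> t b = v)"

datatype 'v cut_vertex = Plain 'v | Sharp 'v | Flat 'v

definition cut_vertices :: "'v set \<Rightarrow> ('a \<Rightarrow> 'v) \<Rightarrow> ('a \<Rightarrow> 'v) \<Rightarrow> ('a \<times> 'a) set \<Rightarrow> 'v cut_vertex set" where
  "cut_vertices V h t Z =
     Plain ` {v\<in>V. \<not> relational h t Z v} \<union> Sharp ` {v\<in>V. relational h t Z v} \<union> Flat ` {v\<in>V. relational h t Z v}"

text \<open>h', t' are head/tail maps of the excised quiver (arrow a' is identified with a):
endpoints at non-relational v go to v', endpoints at relational v are reattached to
v(sharp) or v(flat) so that b'a' is a path iff ba \<notin> Z.\<close>
definition is_cut_reattachment ::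
  "'a set \<Rightarrow> ('a \<Rightarrow> 'v) \<Rightarrow> ('a \<Rightarrow> 'v) \<Rightarrow> ('a \<times> 'a) set \<Rightarrow> ('a \<Rightarrow> 'v cut_vertex) \<Rightarrow> ('a \<Rightarrow> 'v cut_vertex) \<Rightarrow> bool" where
  "is_cut_reattachment A h t Z h' t' =
    ((\<forall>a\<in>A. (if relational h t Z (h a) then h' a \<in> {Sharp (h a), Flat (h a)} else h' a = Plain (h a))
          \<and> (if relational h t Z (t a) then t' a \<in> {Sharp (t a), Flat (t a)} else t' a = Plain (t a))) \<and>
     (\<forall>a\<in>A. \<forall>b\<in>A. h a = t b \<and> relational h t Z (h a) \<longrightarrow> (h' a = t' b \<longleftrightarrow> (b, a) \<notin> Z)))"

end

theory Submission
  imports Defs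
begin

lemma ptwist_Nil[simp]: "ptwist \<sigma> [] = id"
  by (simp add: ptwist_def)
lemma ptwist_Cons[simp]: "ptwist \<sigma> (a # as) = \<sigma> a \<circ> ptwist \<sigma> as"
  by (simp add: ptwist_def)
lemma ptwist_append: "ptwist \<sigma> (xs @ ys) = ptwist \<sigma> xs \<circ> ptwist \<sigma> ys"
  by (induct xs) auto

definition good_map :: "('k::division_ring \<Rightarrow> 'k) \<Rightarrow> bool" where
  "good_map f = ((\<forall>x y. f (x + y) = f x + f y) \<and> (\<forall>x y. f (x * y) = f x * f y) \<and> f 1 = 1)"

lemma good_map_zero: "good_map f \<Longrightarrow> f 0 = 0"
  unfolding good_map_def by (metis add_cancel_right_right add_0)

lemma good_map_minus: "good_map f \<Longrightarrow> f (- x) = - f x"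
  using good_map_zero[of f] unfolding good_map_def
  by (metis add.right_inverse add_eq_0_iff)

lemma good_map_comp: "good_map f \<Longrightarrow> good_map g \<Longrightarrow> good_map (f \<circ> g)"
  unfolding good_map_def by auto

lemma good_map_ptwist:
  assumes "\<forall>a\<in>A. ring_automorphism (\<sigma> a)" "set as \<subseteq> A"
  shows "good_map (ptwist \<sigma> as)"
  using assms(2)
proof (induct as)
  case Nil then show ?case by (simp add: good_map_def)
next
  case (Cons a as)
  then have "good_map (\<sigma> a)" using assms(1) unfolding ring_automorphism_def good_map_def by auto
  with Cons have "good_map (\<sigma> a \<circ> ptwist \<sigma> as)" by (intro good_map_comp) auto
  then show ?case by (simp only: ptwist_Cons)
qed

lemma good_map_sum: "good_map \<phi> \<Longrightarrow> \<phi> (sum F S) = (\<Sum>x\<in>S. \<phi> (F x))"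
proof (induct S rule: infinite_finite_induct)
  case (infinite A) then show ?case by (simp add: good_map_zero)
next
  case empty then show ?case by (simp add: good_map_zero)
next
  case (insert x F) then show ?case by (simp add: good_map_def)
qed

lemma ptail_app: "ptail t (v, xs @ ys) = ptail t (ptail t (v, xs), ys)"
  by (simp add: ptail_def)

lemma ptail_concat: "ptail t p = fst q \<Longrightarrow> ptail t (pconcat p q) = ptail t q"
  by (cases p, cases q) (auto simp: pconcat_def ptail_def split: if_splits)

locale spa =
  fixes V :: "'v set" and A :: "'a set" and h t :: "'a \<Rightarrow> 'v"
    and \<sigma> :: "'a \<Rightarrow> 'k::division_ring \<Rightarrow> 'k"
  assumes finV: "finite V"
    and ends: "\<forall>a\<in>A. h a \<in> V \<and> t a \<in> V"
    and aut: "\<forall>a\<in>A. ring_automorphism (\<sigma> a)"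
begin

abbreviation "qp \<equiv> qpath V A h t"
abbreviation "R \<equiv> semilinear_path_algebra V A h t \<sigma>"

definition conv :: "('v \<times> 'a list \<Rightarrow> 'k) \<Rightarrow> ('v \<times> 'a list \<Rightarrow> 'k) \<Rightarrow> 'v \<times> 'a list \<Rightarrow> 'k" where
  "conv f g r = (\<Sum>i\<le>length (snd r). f (fst r, take i (snd r)) *
       ptwist \<sigma> (take i (snd r)) (g (ptail t (fst r, take i (snd r)), drop i (snd r))))"

lemma qp_take:
  assumes "qp (v, as)" "i \<le> length as"
  shows "qp (v, take i as)"
proof -
  have A: "set as \<subseteq> A" using assms(1) by (simp add: qpath_def)
  have hv: "as \<noteq> [] \<Longrightarrow> v = h (hd as)" using assms(1) by (simp add: qpath_def)
  have vV: "v \<in> V"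
  proof (cases "as = []")
    case True then show ?thesis using assms(1) by (simp add: qpath_def)
  next
    case False then show ?thesis using hv A ends by (metis hd_in_set subsetD)
  qed
  have s1: "set (take i as) \<subseteq> A" using A by (meson in_set_takeD subsetI subsetD)
  have s2: "take i as \<noteq> [] \<Longrightarrow> v = h (hd (take i as))" using hv by (auto simp: hd_take)
  have s3: "\<forall>j. Suc j < length (take i as) \<longrightarrow> t (take i as ! j) = h (take i as ! Suc j)"
    using assms(1) by (auto simp: qpath_def)
  show ?thesis unfolding qpath_def using s1 s2 s3 vV by auto
qed

lemma qp_drop:
  assumes "qp (v, as)" "i \<le> length as"
  shows "qp (ptail t (v, take i as), drop i as)"
proof -
  have A: "set as \<subseteq> A" using assms(1) by (simp add: qpath_def)
  show ?thesis
  proof (cases "drop i as = []")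
    case True
    then show ?thesis using assms ends A unfolding qpath_def ptail_def
      by (auto simp: last_in_set) (metis in_set_takeD last_in_set subsetD)
  next
    case False
    then have il: "i < length as" by simp
    have "ptail t (v, take i as) = h (hd (drop i as))"
    proof (cases i)
      case 0 then show ?thesis using assms False by (auto simp: qpath_def ptail_def)
    next
      case (Suc j)
      then have "t (as ! j) = h (as ! i)" using assms il by (auto simp: qpath_def)
      then show ?thesis using Suc il by (auto simp: ptail_def last_conv_nth hd_drop_conv_nth)
    qed
    then show ?thesis using assms A False
      unfolding qpath_def by (auto dest: in_set_dropD)
  qed
qed

lemma carrier_R: "f \<in> carrier R \<longleftrightarrow> (\<forall>p. f p \<noteq> 0 \<longrightarrow> qp p) \<and> finite {p. f p \<noteq> 0}"
  by (simp add: semilinear_path_algebra_def)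

lemma carr_qp: "f \<in> carrier R \<Longrightarrow> f p \<noteq> 0 \<Longrightarrow> qp p"
  unfolding carrier_R by blast

lemma carr_gm: "f \<in> carrier R \<Longrightarrow> f p \<noteq> 0 \<Longrightarrow> good_map (ptwist \<sigma> (snd p))"
  using carr_qp[of f p] aut by (intro good_map_ptwist) (auto simp: qpath_def)

lemma qp_gm: "qp p \<Longrightarrow> good_map (ptwist \<sigma> (snd p))"
  using aut by (intro good_map_ptwist) (auto simp: qpath_def)

lemma carr_tw0: "f \<in> carrier R \<Longrightarrow> f (v, xs) * ptwist \<sigma> xs 0 = 0"
  using carr_gm[of f "(v, xs)"] good_map_zero by (cases "f (v, xs) = 0") auto

lemma mult_R: "(f \<otimes>\<^bsub>R\<^esub> g) r = (\<Sum>(p, q) \<in> {(p, q). qp p \<and> qp q \<and> f p \<noteq> 0 \<and> g q \<noteq> 0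
                                   \<and> ptail t p = fst q \<and> pconcat p q = r}.
                        f p * ptwist \<sigma> (snd p) (g q))"
  by (simp add: semilinear_path_algebra_def)

lemma mult_eq:
  assumes f: "f \<in> carrier R" and g: "g \<in> carrier R"
  shows "(f \<otimes>\<^bsub>R\<^esub> g) r = conv f g r"
proof -
  define n where "n = length (snd r)"
  define P where "P i = (fst r, take i (snd r))" for i
  define Q where "Q i = (ptail t (P i), drop i (snd r))" for i
  define F where "F = (\<lambda>(p,q). f p * ptwist \<sigma> (snd p) (g q))"
  define S where "S = {(p, q). qp p \<and> qp q \<and> f p \<noteq> 0 \<and> g q \<noteq> 0 \<and> ptail t p = fst q \<and> pconcat p q = r}"
  have lhs: "(f \<otimes>\<^bsub>R\<^esub> g) r = sum F S" unfolding mult_R F_def S_def by simp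
  have rhs: "conv f g r = (\<Sum>i\<le>n. F (P i, Q i))"
    unfolding conv_def F_def n_def P_def Q_def by simp
  define T where "T = {i \<in> {..n}. (P i, Q i) \<in> S}"
  have cat: "pconcat (P i) (Q i) = r" for i by (simp add: pconcat_def P_def Q_def)
  have "(\<Sum>i\<le>n. F (P i, Q i)) = (\<Sum>i\<in>T. F (P i, Q i))"
  proof (rule sum.mono_neutral_right)
    show "\<forall>i\<in>{..n} - T. F (P i, Q i) = 0"
    proof
      fix i assume i: "i \<in> {..n} - T"
      show "F (P i, Q i) = 0"
      proof (cases "f (P i) = 0")
        case False
        have gm: "good_map (ptwist \<sigma> (snd (P i)))" using carr_gm[OF f False] .
        show ?thesis
        proof (cases "g (Q i) = 0")
          case True then show ?thesis using gm good_map_zero[OF gm] by (simp add: F_def)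
        next
          case False2: False
          have "(P i, Q i) \<in> S" unfolding S_def using carr_qp[OF f False] carr_qp[OF g False2] False False2 cat
            by (simp add: Q_def)
          then show ?thesis using i T_def by auto
        qed
      qed (simp add: F_def)
    qed
  qed (auto simp: T_def)
  also have "\<dots> = sum F S"
  proof (rule sum.reindex_bij_betw)
    show "bij_betw (\<lambda>i. (P i, Q i)) T S"
    proof (rule bij_betw_imageI)
      show "inj_on (\<lambda>i. (P i, Q i)) T"
      proof
        fix i j assume "i \<in> T" "j \<in> T" "(P i, Q i) = (P j, Q j)"
        then have "take i (snd r) = take j (snd r)" "i \<le> n" "j \<le> n" by (auto simp: P_def T_def)
        then show "i = j" unfolding n_def by (metis length_take min.absorb2)
      qed
      show "(\<lambda>i. (P i, Q i)) ` T = S"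
      proof
        show "(\<lambda>i. (P i, Q i)) ` T \<subseteq> S" by (auto simp: T_def)
        show "S \<subseteq> (\<lambda>i. (P i, Q i)) ` T"
        proof
          fix x assume x: "x \<in> S"
          then obtain p q where pq: "x = (p, q)" "ptail t p = fst q" "pconcat p q = r" by (auto simp: S_def)
          define i where "i = length (snd p)"
          have r: "snd r = snd p @ snd q" "fst r = fst p" using pq by (auto simp: pconcat_def)
          have "P i = p" using r by (simp add: P_def i_def prod_eq_iff)
          moreover have "Q i = q"
          proof -
            have "Q i = (ptail t p, drop i (snd r))" by (simp add: Q_def \<open>P i = p\<close>)
            also have "\<dots> = (fst q, snd q)" using r pq(2) by (simp add: i_def)
            finally show ?thesis by simp
          qed
          moreover have "i \<le> n" using r by (simp add: n_def i_def)
          ultimately show "x \<in> (\<lambda>i. (P i, Q i)) ` T" using x pq by (auto simp: T_def image_iff)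
        qed
      qed
    qed
  qed
  finally show ?thesis using lhs rhs by simp
qed

lemma qp_V: "qp (v, as) \<Longrightarrow> v \<in> V"
proof -
  assume "qp (v, as)"
  then have "qp (v, take 0 as)" by (rule qp_take) simp
  then show ?thesis by (simp add: qpath_def)
qed

lemma qp_concat:
  assumes p: "qp p" and q: "qp q" and pq: "ptail t p = fst q"
  shows "qp (pconcat p q)"
proof -
  obtain v xs where pv: "p = (v, xs)" by (cases p)
  obtain w ys where qw: "q = (w, ys)" by (cases q)
  have xsA: "set xs \<subseteq> A" and ysA: "set ys \<subseteq> A" using p q pv qw by (auto simp: qpath_def)
  have hx: "xs \<noteq> [] \<Longrightarrow> v = h (hd xs)" and hy: "ys \<noteq> [] \<Longrightarrow> w = h (hd ys)"
    using p q pv qw by (auto simp: qpath_def)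
  have cx: "\<And>i. Suc i < length xs \<Longrightarrow> t (xs ! i) = h (xs ! Suc i)"
   and cy: "\<And>i. Suc i < length ys \<Longrightarrow> t (ys ! i) = h (ys ! Suc i)"
    using p q pv qw by (auto simp: qpath_def)
  have vV: "v \<in> V" using p pv qp_V by simp
  have jn: "xs \<noteq> [] \<Longrightarrow> t (last xs) = w" using pq pv qw by (simp add: ptail_def)
  have x0: "xs = [] \<Longrightarrow> v = w" using pq pv qw by (simp add: ptail_def)
  have head: "xs @ ys \<noteq> [] \<Longrightarrow> v = h (hd (xs @ ys))"
    using hx hy x0 by (cases xs) auto
  have cons: "t ((xs @ ys) ! i) = h ((xs @ ys) ! Suc i)" if i: "Suc i < length (xs @ ys)" for i
  proof -
    consider "Suc i < length xs" | "Suc i = length xs" | "Suc i > length xs" by linarith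
    then show ?thesis
    proof cases
      case 1 then show ?thesis using cx by (simp add: nth_append)
    next
      case 2
      then have "xs \<noteq> []" "ys \<noteq> []" using i by auto
      moreover have "length xs - 1 = i" using 2 by simp
      ultimately have "t (xs ! i) = h (ys ! 0)" using jn hy by (simp add: last_conv_nth hd_conv_nth)
      then show ?thesis using 2 by (simp add: nth_append)
    next
      case 3
      then have "Suc (i - length xs) < length ys" using i by auto
      then have "t (ys ! (i - length xs)) = h (ys ! Suc (i - length xs))" using cy by blast
      then show ?thesis using 3 by (simp add: nth_append Suc_diff_le)
    qed
  qed
  show ?thesis unfolding qpath_def pconcat_def using pv qw xsA ysA head cons vV by auto
qed

lemma carr_finite: "f \<in> carrier R \<Longrightarrow> finite {p. f p \<noteq> 0}"
  by (simp add: carrier_R)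

lemma mult_closed:
  assumes f: "f \<in> carrier R" and g: "g \<in> carrier R"
  shows "f \<otimes>\<^bsub>R\<^esub> g \<in> carrier R"
proof -
  have nz: "\<exists>p q. qp p \<and> qp q \<and> f p \<noteq> 0 \<and> g q \<noteq> 0 \<and> ptail t p = fst q \<and> pconcat p q = r"
    if "(f \<otimes>\<^bsub>R\<^esub> g) r \<noteq> 0" for r
  proof (rule ccontr)
    assume "\<not> ?thesis"
    then have "{(p, q). qp p \<and> qp q \<and> f p \<noteq> 0 \<and> g q \<noteq> 0 \<and> ptail t p = fst q \<and> pconcat p q = r} = {}"
      by auto
    then show False using that by (simp only: mult_R) simp
  qed
  have "{r. (f \<otimes>\<^bsub>R\<^esub> g) r \<noteq> 0} \<subseteq> (\<lambda>(p,q). pconcat p q) ` ({p. f p \<noteq> 0} \<times> {q. g q \<noteq> 0})"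
  proof
    fix r assume "r \<in> {r. (f \<otimes>\<^bsub>R\<^esub> g) r \<noteq> 0}"
    then obtain p q where "f p \<noteq> 0" "g q \<noteq> 0" "pconcat p q = r" using nz by blast
    then show "r \<in> (\<lambda>(p,q). pconcat p q) ` ({p. f p \<noteq> 0} \<times> {q. g q \<noteq> 0})"
      by (intro image_eqI[of _ _ "(p,q)"]) auto
  qed
  moreover have "finite ((\<lambda>(p,q). pconcat p q) ` ({p. f p \<noteq> 0} \<times> {q. g q \<noteq> 0}))"
    using carr_finite[OF f] carr_finite[OF g] by auto
  ultimately have fin: "finite {r. (f \<otimes>\<^bsub>R\<^esub> g) r \<noteq> 0}" by (rule finite_subset)
  have "qp r" if "(f \<otimes>\<^bsub>R\<^esub> g) r \<noteq> 0" for r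
    using nz[OF that] qp_concat by blast
  with fin show ?thesis unfolding carrier_R by blast
qed

lemma one_R: "\<one>\<^bsub>R\<^esub> = (\<lambda>p. if snd p = [] \<and> fst p \<in> V then 1 else 0)"
  by (simp add: semilinear_path_algebra_def)
lemma zero_R: "\<zero>\<^bsub>R\<^esub> = (\<lambda>p. 0)"
  by (simp add: semilinear_path_algebra_def)
lemma add_R: "f \<oplus>\<^bsub>R\<^esub> g = (\<lambda>p. f p + g p)"
  by (simp add: semilinear_path_algebra_def)

lemma one_closed: "\<one>\<^bsub>R\<^esub> \<in> carrier R"
proof -
  have "{p. (\<one>\<^bsub>R\<^esub>) p \<noteq> (0::'k)} \<subseteq> (\<lambda>v. (v, [])) ` V" by (auto simp: one_R)
  then have "finite {p. (\<one>\<^bsub>R\<^esub>) p \<noteq> (0::'k)}" using finV finite_subset by blast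
  moreover have "qp p" if "(\<one>\<^bsub>R\<^esub>) p \<noteq> 0" for p
    using that by (auto simp: one_R qpath_def split: if_splits)
  ultimately show ?thesis unfolding carrier_R by blast
qed

lemma add_closed: "f \<in> carrier R \<Longrightarrow> g \<in> carrier R \<Longrightarrow> f \<oplus>\<^bsub>R\<^esub> g \<in> carrier R"
proof -
  assume f: "f \<in> carrier R" and g: "g \<in> carrier R"
  have "{p. (f \<oplus>\<^bsub>R\<^esub> g) p \<noteq> 0} \<subseteq> {p. f p \<noteq> 0} \<union> {p. g p \<noteq> 0}" by (auto simp: add_R)
  then have "finite {p. (f \<oplus>\<^bsub>R\<^esub> g) p \<noteq> 0}"
    using carr_finite[OF f] carr_finite[OF g] finite_subset by blast
  moreover have "qp p" if "(f \<oplus>\<^bsub>R\<^esub> g) p \<noteq> 0" for p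
    using that carr_qp[OF f, of p] carr_qp[OF g, of p] by (auto simp: add_R) (metis add.left_neutral)
  ultimately show ?thesis unfolding carrier_R by blast
qed

lemma zero_closed: "\<zero>\<^bsub>R\<^esub> \<in> carrier R"
  by (simp add: carrier_R zero_R)

lemma neg_closed: "f \<in> carrier R \<Longrightarrow> (\<lambda>p. - f p) \<in> carrier R"
  by (simp add: carrier_R)

lemma sum_single: "finite S \<Longrightarrow> x \<in> S \<Longrightarrow> (\<And>y. y \<in> S \<Longrightarrow> y \<noteq> x \<Longrightarrow> G y = 0) \<Longrightarrow> sum G S = G x"
  by (simp add: sum.remove sum.neutral)

lemma l_one: assumes f: "f \<in> carrier R" shows "\<one>\<^bsub>R\<^esub> \<otimes>\<^bsub>R\<^esub> f = f"
proof (rule ext)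
  fix r :: "'v \<times> 'a list"
  obtain v as where r: "r = (v, as)" by (cases r)
  have "(\<one>\<^bsub>R\<^esub> \<otimes>\<^bsub>R\<^esub> f) r = conv \<one>\<^bsub>R\<^esub> f r" by (rule mult_eq[OF one_closed f])
  also have "\<dots> = (if v \<in> V then 1 else 0) * f r"
    unfolding conv_def r snd_conv fst_conv
    by (subst sum_single[where x=0]) (auto simp: one_R ptail_def)
  also have "\<dots> = f r" using carr_qp[OF f, of r] qp_V r by auto
  finally show "(\<one>\<^bsub>R\<^esub> \<otimes>\<^bsub>R\<^esub> f) r = f r" .
qed

lemma r_one: assumes f: "f \<in> carrier R" shows "f \<otimes>\<^bsub>R\<^esub> \<one>\<^bsub>R\<^esub> = f"
proof (rule ext)
  fix r :: "'v \<times> 'a list"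
  obtain v as where r: "r = (v, as)" by (cases r)
  have "(f \<otimes>\<^bsub>R\<^esub> \<one>\<^bsub>R\<^esub>) r = conv f \<one>\<^bsub>R\<^esub> r" by (rule mult_eq[OF f one_closed])
  also have "\<dots> = f r * ptwist \<sigma> as (if ptail t r \<in> V then 1 else 0)"
    unfolding conv_def r snd_conv fst_conv
    by (subst sum_single[where x="length as"]) (auto simp: one_R carr_tw0[OF f])
  also have "\<dots> = f r"
  proof (cases "f r = 0")
    case False
    then have "qp r" using carr_qp[OF f] by blast
    then have "ptail t r \<in> V" using qp_drop[of v as "length as"] qp_V r by simp
    moreover have "good_map (ptwist \<sigma> as)" using carr_gm[OF f False] r by simp
    ultimately show ?thesis by (simp add: good_map_def)
  qed simp
  finally show "(f \<otimes>\<^bsub>R\<^esub> \<one>\<^bsub>R\<^esub>) r = f r" .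
qed

lemma l_distr:
  assumes f: "f \<in> carrier R" and g: "g \<in> carrier R" and k: "k \<in> carrier R"
  shows "(f \<oplus>\<^bsub>R\<^esub> g) \<otimes>\<^bsub>R\<^esub> k = f \<otimes>\<^bsub>R\<^esub> k \<oplus>\<^bsub>R\<^esub> g \<otimes>\<^bsub>R\<^esub> k"
proof (rule ext)
  fix r
  show "((f \<oplus>\<^bsub>R\<^esub> g) \<otimes>\<^bsub>R\<^esub> k) r = (f \<otimes>\<^bsub>R\<^esub> k \<oplus>\<^bsub>R\<^esub> g \<otimes>\<^bsub>R\<^esub> k) r"
    unfolding mult_eq[OF add_closed[OF f g] k] mult_eq[OF f k] mult_eq[OF g k]
    by (simp add: add_R conv_def sum.distrib distrib_right)
qed

lemma r_distr:
  assumes f: "f \<in> carrier R" and g: "g \<in> carrier R" and k: "k \<in> carrier R"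
  shows "k \<otimes>\<^bsub>R\<^esub> (f \<oplus>\<^bsub>R\<^esub> g) = k \<otimes>\<^bsub>R\<^esub> f \<oplus>\<^bsub>R\<^esub> k \<otimes>\<^bsub>R\<^esub> g"
proof (rule ext)
  fix r
  have "k p * ptwist \<sigma> (snd p) (f q + g q) = k p * ptwist \<sigma> (snd p) (f q) + k p * ptwist \<sigma> (snd p) (g q)" for p q
  proof (cases "k p = 0")
    case False
    then show ?thesis using carr_gm[OF k False] by (simp add: good_map_def distrib_left)
  qed simp
  note * = this[of "(fst r, take i (snd r))" for i, simplified]
  show "(k \<otimes>\<^bsub>R\<^esub> (f \<oplus>\<^bsub>R\<^esub> g)) r = (k \<otimes>\<^bsub>R\<^esub> f \<oplus>\<^bsub>R\<^esub> k \<otimes>\<^bsub>R\<^esub> g) r"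
    unfolding mult_eq[OF k add_closed[OF f g]] mult_eq[OF k f] mult_eq[OF k g]
    by (simp add: add_R conv_def sum.distrib *)
qed

lemma m_assoc:
  assumes f: "f \<in> carrier R" and g: "g \<in> carrier R" and k: "k \<in> carrier R"
  shows "(f \<otimes>\<^bsub>R\<^esub> g) \<otimes>\<^bsub>R\<^esub> k = f \<otimes>\<^bsub>R\<^esub> (g \<otimes>\<^bsub>R\<^esub> k)"
proof (rule ext)
  fix r :: "'v \<times> 'a list"
  obtain v as where r: "r = (v, as)" by (cases r)
  define n where "n = length as"
  define pt where "pt i = ptail t (v, take i as)" for i
  define G where "G i j = f (v, take i as) * (ptwist \<sigma> (take i as) (g (pt i, drop i (take j as)))
      * ptwist \<sigma> (take j as) (k (pt j, drop j as)))" for i j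
  have fg: "f \<otimes>\<^bsub>R\<^esub> g \<in> carrier R" and gk: "g \<otimes>\<^bsub>R\<^esub> k \<in> carrier R"
    using mult_closed f g k by auto
  have L1: "(f \<otimes>\<^bsub>R\<^esub> g) (v, take j as) * ptwist \<sigma> (take j as) (k (pt j, drop j as)) = (\<Sum>i\<le>j. G i j)"
    if j: "j \<le> n" for j
  proof -
    have lj: "length (take j as) = j" using j by (simp add: n_def)
    have "(f \<otimes>\<^bsub>R\<^esub> g) (v, take j as) = (\<Sum>i\<le>j. f (v, take i as) *
       ptwist \<sigma> (take i as) (g (pt i, drop i (take j as))))"
      unfolding mult_eq[OF f g] conv_def fst_conv snd_conv lj
      by (rule sum.cong) (auto simp: pt_def min_absorb1)
    then show ?thesis by (simp add: G_def sum_distrib_right mult.assoc)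
  qed
  have R1: "f (v, take i as) * ptwist \<sigma> (take i as) ((g \<otimes>\<^bsub>R\<^esub> k) (pt i, drop i as))
      = (\<Sum>m\<le>n - i. G i (i + m))" if i: "i \<le> n" for i
  proof (cases "f (v, take i as) = 0")
    case True then show ?thesis by (simp add: G_def)
  next
    case False
    have gm: "good_map (ptwist \<sigma> (take i as))" using carr_gm[OF f False] by simp
    have ld: "length (drop i as) = n - i" by (simp add: n_def)
    have e1: "take m (drop i as) = drop i (take (i + m) as)" for m by (simp add: take_drop add.commute)
    have e2: "ptail t (pt i, take m (drop i as)) = pt (i + m)" for m
      unfolding pt_def ptail_app[symmetric] by (simp add: take_add)
    have e3: "ptwist \<sigma> (take i as) (ptwist \<sigma> (take m (drop i as)) y) = ptwist \<sigma> (take (i + m) as) y" for m y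
      by (simp add: take_add ptwist_append)
    have e4: "drop m (drop i as) = drop (i + m) as" for m by (metis drop_drop add.commute)
    have "(g \<otimes>\<^bsub>R\<^esub> k) (pt i, drop i as) = (\<Sum>m\<le>n - i. g (pt i, take m (drop i as)) *
        ptwist \<sigma> (take m (drop i as)) (k (ptail t (pt i, take m (drop i as)), drop m (drop i as))))"
      unfolding mult_eq[OF g k] conv_def fst_conv snd_conv ld ..
    also have "\<dots> = (\<Sum>m\<le>n - i. g (pt i, drop i (take (i + m) as)) *
        ptwist \<sigma> (take m (drop i as)) (k (pt (i + m), drop (i + m) as)))"
      by (rule sum.cong) (simp_all only: e2 e4, simp only: e1)
    finally have S: "(g \<otimes>\<^bsub>R\<^esub> k) (pt i, drop i as) = \<dots>" .
    have "ptwist \<sigma> (take i as) ((g \<otimes>\<^bsub>R\<^esub> k) (pt i, drop i as)) = (\<Sum>m\<le>n - i.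
        ptwist \<sigma> (take i as) (g (pt i, drop i (take (i + m) as))) *
        ptwist \<sigma> (take i as) (ptwist \<sigma> (take m (drop i as)) (k (pt (i + m), drop (i + m) as))))"
      unfolding S good_map_sum[OF gm] using gm by (simp add: good_map_def)
    also have "\<dots> = (\<Sum>m\<le>n - i.
        ptwist \<sigma> (take i as) (g (pt i, drop i (take (i + m) as))) *
        ptwist \<sigma> (take (i + m) as) (k (pt (i + m), drop (i + m) as)))"
      by (simp only: e3)
    finally have "ptwist \<sigma> (take i as) ((g \<otimes>\<^bsub>R\<^esub> k) (pt i, drop i as)) = \<dots>" .
    then show ?thesis by (simp add: G_def sum_distrib_left)
  qed
  have "((f \<otimes>\<^bsub>R\<^esub> g) \<otimes>\<^bsub>R\<^esub> k) r = (\<Sum>j\<le>n. (f \<otimes>\<^bsub>R\<^esub> g) (v, take j as) * ptwist \<sigma> (take j as) (k (pt j, drop j as)))"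
    unfolding mult_eq[OF fg k] conv_def r fst_conv snd_conv n_def pt_def ..
  also have "\<dots> = (\<Sum>j\<le>n. \<Sum>i\<le>j. G i j)" by (rule sum.cong) (auto simp: L1)
  also have "\<dots> = (\<Sum>(i, m)\<in>{(i, m). i + m \<le> n}. G i (i + m))"
    using sum.triangle_reindex_eq[of "\<lambda>i m. G i (i + m)" n] by simp
  also have "\<dots> = (\<Sum>(i, m)\<in>Sigma {..n} (\<lambda>i. {..n - i}). G i (i + m))"
    by (rule sum.cong) auto
  also have "\<dots> = (\<Sum>i\<le>n. \<Sum>m\<le>n - i. G i (i + m))"
    by (rule sum.Sigma[symmetric]) auto
  also have "\<dots> = (\<Sum>i\<le>n. f (v, take i as) * ptwist \<sigma> (take i as) ((g \<otimes>\<^bsub>R\<^esub> k) (pt i, drop i as)))"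
    by (rule sum.cong) (auto simp: R1)
  also have "\<dots> = (f \<otimes>\<^bsub>R\<^esub> (g \<otimes>\<^bsub>R\<^esub> k)) r"
    unfolding mult_eq[OF f gk] conv_def r fst_conv snd_conv n_def pt_def ..
  finally show "((f \<otimes>\<^bsub>R\<^esub> g) \<otimes>\<^bsub>R\<^esub> k) r = (f \<otimes>\<^bsub>R\<^esub> (g \<otimes>\<^bsub>R\<^esub> k)) r" .
qed

lemma is_ring: "ring R"
proof (rule ringI)
  show "abelian_group R"
  proof (rule abelian_groupI)
    fix x assume x: "x \<in> carrier R"
    show "\<exists>y\<in>carrier R. y \<oplus>\<^bsub>R\<^esub> x = \<zero>\<^bsub>R\<^esub>"
      by (rule bexI[of _ "\<lambda>p. - x p"]) (auto simp: add_R zero_R neg_closed[OF x])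
  qed (use add_closed zero_closed in \<open>auto simp: add_R zero_R add.assoc add.commute\<close>)
  show "monoid R"
    by (rule monoidI) (auto simp: mult_closed one_closed m_assoc l_one r_one)
qed (auto simp: l_distr r_distr)

lemma mult_nonqp: "\<not> qp r \<Longrightarrow> (f \<otimes>\<^bsub>R\<^esub> g) r = 0"
proof -
  assume nr: "\<not> qp r"
  have "{(p, q). qp p \<and> qp q \<and> f p \<noteq> 0 \<and> g q \<noteq> 0 \<and> ptail t p = fst q \<and> pconcat p q = r} = {}"
    using qp_concat nr by blast
  then show ?thesis by (simp only: mult_R) simp
qed

lemma path_elem_carrier: "qp p \<Longrightarrow> (path_elem p :: _ \<Rightarrow> 'k) \<in> carrier R"
  by (simp add: carrier_R path_elem_def)

lemma scalar_carrier: "(scalar_elem V (c::'k)) \<in> carrier R"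
proof -
  have "{p. scalar_elem V c p \<noteq> (0::'k)} \<subseteq> (\<lambda>v. (v, [])) ` V" by (auto simp: scalar_elem_def split: if_splits)
  then have "finite {p. scalar_elem V c p \<noteq> (0::'k)}" using finV finite_subset by blast
  moreover have "qp p" if "scalar_elem V c p \<noteq> 0" for p
    using that by (auto simp: scalar_elem_def qpath_def split: if_splits)
  ultimately show ?thesis unfolding carrier_R by blast
qed

lemma path_elem_mult:
  assumes p: "qp p" and q: "qp q" and pq: "ptail t p = fst q"
  shows "(path_elem p :: _ \<Rightarrow> 'k) \<otimes>\<^bsub>R\<^esub> path_elem q = path_elem (pconcat p q)"
proof (rule ext)
  fix r
  have "{(p', q'). qp p' \<and> qp q' \<and> (path_elem p :: _ \<Rightarrow> 'k) p' \<noteq> 0 \<and> (path_elem q :: _ \<Rightarrow> 'k) q' \<noteq> 0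
     \<and> ptail t p' = fst q' \<and> pconcat p' q' = r} = (if pconcat p q = r then {(p, q)} else {})"
    using p q pq by (auto simp: path_elem_def)
  moreover have "ptwist \<sigma> (snd p) 1 = 1" using qp_gm[OF p] by (simp add: good_map_def)
  ultimately show "((path_elem p :: _ \<Rightarrow> 'k) \<otimes>\<^bsub>R\<^esub> path_elem q) r = path_elem (pconcat p q) r"
    by (simp only: mult_R) (simp add: path_elem_def)
qed

lemma scalar_path_mult:
  assumes p: "qp p"
  shows "scalar_elem V (c::'k) \<otimes>\<^bsub>R\<^esub> path_elem p = (\<lambda>q. if q = p then c else 0)"
proof (rule ext)
  fix r
  obtain v as where pv: "p = (v, as)" by (cases p)
  have vV: "v \<in> V" using p pv qp_V by simp
  have q0: "qp (v, [])" using vV by (simp add: qpath_def)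
  have "{(p', q'). qp p' \<and> qp q' \<and> scalar_elem V c p' \<noteq> 0 \<and> (path_elem p :: _ \<Rightarrow> 'k) q' \<noteq> 0
     \<and> ptail t p' = fst q' \<and> pconcat p' q' = r} = (if c \<noteq> 0 \<and> r = p then {((v, []), p)} else {})"
    using p q0 pv vV by (auto simp: path_elem_def scalar_elem_def ptail_def pconcat_def split: if_splits)
  then show "(scalar_elem V c \<otimes>\<^bsub>R\<^esub> path_elem p) r = (if r = p then c else 0)"
    using vV by (simp only: mult_R) (auto simp: path_elem_def scalar_elem_def)
qed

lemma nonadm_in_ideal:
  assumes I: "ideal I R" and rel: "relation_elems h Z \<subseteq> I" and p: "qp p"
    and i: "Suc i < length (snd p)" and z: "(snd p ! i, snd p ! Suc i) \<in> Z"
  shows "(path_elem p :: _ \<Rightarrow> 'k) \<in> I"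
proof -
  obtain v as where pv: "p = (v, as)" by (cases p)
  define b where "b = as ! i"
  define a where "a = as ! Suc i"
  have il: "Suc i < length as" using i pv by simp
  have A: "set as \<subseteq> A" using p pv by (simp add: qpath_def)
  have bA: "b \<in> A" and aA: "a \<in> A" using A il by (auto simp: a_def b_def)
  have tb: "t b = h a" using p pv il by (simp add: qpath_def a_def b_def)
  have hd_: "ptail t (v, take i as) = h b"
  proof (cases i)
    case 0
    then have "as \<noteq> []" using il by auto
    then have "v = h (hd as)" using p pv by (simp add: qpath_def)
    then show ?thesis using 0 \<open>as \<noteq> []\<close> by (simp add: ptail_def b_def hd_conv_nth)
  next
    case (Suc j)
    then have "t (as ! j) = h (as ! i)" using p pv il by (auto simp: qpath_def)
    then show ?thesis using Suc il by (auto simp: ptail_def last_conv_nth b_def)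
  qed
  have tk: "take (Suc (Suc i)) as = take i as @ [b, a]"
    using il by (simp add: take_Suc_conv_app_nth a_def b_def)
  have mid: "qp (h b, [b, a])" using aA bA tb by (simp add: qpath_def)
  have p1: "qp (v, take i as)" using qp_take p pv il by simp
  have p3: "qp (ptail t (v, take (Suc (Suc i)) as), drop (Suc (Suc i)) as)" using qp_drop p pv il by simp
  have p12: "qp (v, take (Suc (Suc i)) as)" using qp_take p pv il by simp
  have e1: "(path_elem (v, take i as) :: _ \<Rightarrow> 'k) \<otimes>\<^bsub>R\<^esub> path_elem (h b, [b, a]) = path_elem (v, take (Suc (Suc i)) as)"
    using path_elem_mult[OF p1 mid] hd_ tk by (simp add: pconcat_def)
  have e2: "(path_elem (v, take (Suc (Suc i)) as) :: _ \<Rightarrow> 'k) \<otimes>\<^bsub>R\<^esub>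
      path_elem (ptail t (v, take (Suc (Suc i)) as), drop (Suc (Suc i)) as) = path_elem p"
    using path_elem_mult[OF p12 p3] pv by (simp add: pconcat_def)
  have "(path_elem (h b, [b, a]) :: _ \<Rightarrow> 'k) \<in> I"
    using rel z pv unfolding relation_elems_def a_def b_def by auto
  then have "(path_elem (v, take (Suc (Suc i)) as) :: _ \<Rightarrow> 'k) \<in> I"
    using e1 ideal.I_l_closed[OF I] path_elem_carrier[OF p1] by metis
  then show ?thesis
    using e2 ideal.I_r_closed[OF I] path_elem_carrier[OF p3] by metis
qed

end

fun unc :: "'v cut_vertex \<Rightarrow> 'v" where
  "unc (Plain v) = v" | "unc (Sharp v) = v" | "unc (Flat v) = v"

locale excision = spa V A h t \<sigma>
  for V :: "'v set" and A :: "'a set" and h t :: "'a \<Rightarrow> 'v"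
    and \<sigma> :: "'a \<Rightarrow> 'k::division_ring \<Rightarrow> 'k" +
  fixes Z :: "('a \<times> 'a) set" and h' t' :: "'a \<Rightarrow> 'v cut_vertex"
  assumes Zsub: "Z \<subseteq> {(b, a). a \<in> A \<and> b \<in> A \<and> h a = t b}"
    and reatt: "is_cut_reattachment A h t Z h' t'"
begin

abbreviation "CV \<equiv> cut_vertices V h t Z"

lemma unc_h: "a \<in> A \<Longrightarrow> unc (h' a) = h a"
  using reatt unfolding is_cut_reattachment_def by (auto split: if_splits)
lemma unc_t: "a \<in> A \<Longrightarrow> unc (t' a) = t a"
  using reatt unfolding is_cut_reattachment_def by (auto split: if_splits)
lemma h'_cv: "a \<in> A \<Longrightarrow> h' a \<in> CV"
  using reatt ends unfolding is_cut_reattachment_def cut_vertices_def by (auto split: if_splits)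
lemma t'_cv: "a \<in> A \<Longrightarrow> t' a \<in> CV"
  using reatt ends unfolding is_cut_reattachment_def cut_vertices_def by (auto split: if_splits)
lemma cv_unc: "w \<in> CV \<Longrightarrow> unc w \<in> V"
  unfolding cut_vertices_def by auto
lemma cv_ex: "v \<in> V \<Longrightarrow> \<exists>w\<in>CV. unc w = v"
  unfolding cut_vertices_def by (cases "relational h t Z v") (auto intro: bexI[of _ "Plain v"] bexI[of _ "Sharp v"])
lemma cv_fin: "finite CV"
  unfolding cut_vertices_def using finV by auto

sublocale C: spa CV A h' t' \<sigma>
  using cv_fin h'_cv t'_cv aut by unfold_locales auto

lemma consec_iff:
  assumes aA: "a \<in> A" and bA: "b \<in> A" and tb: "t b = h a"
  shows "t' b = h' a \<longleftrightarrow> (b, a) \<notin> Z"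
proof (cases "relational h t Z (h a)")
  case True
  then show ?thesis using reatt aA bA tb unfolding is_cut_reattachment_def by metis
next
  case False
  then have "(b, a) \<notin> Z" using tb unfolding relational_def by auto
  moreover have "h' a = Plain (h a)" "t' b = Plain (t b)"
    using reatt aA bA False tb unfolding is_cut_reattachment_def by auto
  ultimately show ?thesis using tb by simp
qed

lemma cqp_adm:
  assumes q: "C.qp (w, as)"
  shows "admissible_path V A h t Z (unc w, as)"
proof -
  have A: "set as \<subseteq> A" using q by (simp add: qpath_def)
  have c': "\<And>i. Suc i < length as \<Longrightarrow> t' (as ! i) = h' (as ! Suc i)" using q by (simp add: qpath_def)
  have inA: "\<And>i. i < length as \<Longrightarrow> as ! i \<in> A" using A by auto
  have c: "t (as ! i) = h (as ! Suc i)" if "Suc i < length as" for i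
    using c'[OF that] unc_h unc_t inA that by (metis Suc_lessD)
  have nz: "(as ! i, as ! Suc i) \<notin> Z" if "Suc i < length as" for i
    using consec_iff[of "as ! Suc i" "as ! i"] c[OF that] c'[OF that] inA that by (metis Suc_lessD)
  have hd_: "if as = [] then unc w \<in> V else unc w = h (hd as)"
  proof (cases "as = []")
    case True then show ?thesis using q cv_unc by (simp add: qpath_def)
  next
    case False
    then have "hd as \<in> A" using A by auto
    then show ?thesis using q unc_h False by (simp add: qpath_def)
  qed
  show ?thesis unfolding admissible_path_def qpath_def using A c nz hd_ by simp
qed

lemma adm_cqp:
  assumes ad: "admissible_path V A h t Z (v, as)" and ne: "as \<noteq> []"
  shows "C.qp (h' (hd as), as)" "unc (h' (hd as)) = v"
proof -
  have q: "qp (v, as)" and nz: "\<And>i. Suc i < length as \<Longrightarrow> (as ! i, as ! Suc i) \<notin> Z"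
    using ad by (auto simp: admissible_path_def)
  have A: "set as \<subseteq> A" using q by (simp add: qpath_def)
  have inA: "\<And>i. i < length as \<Longrightarrow> as ! i \<in> A" using A by auto
  have c: "\<And>i. Suc i < length as \<Longrightarrow> t (as ! i) = h (as ! Suc i)" using q by (simp add: qpath_def)
  have c': "t' (as ! i) = h' (as ! Suc i)" if "Suc i < length as" for i
    using consec_iff[of "as ! Suc i" "as ! i"] c[OF that] nz[OF that] inA that by (metis Suc_lessD)
  show "C.qp (h' (hd as), as)" unfolding qpath_def using A c' ne by simp
  have "hd as \<in> A" using A ne by auto
  then show "unc (h' (hd as)) = v" using q ne unc_h by (simp add: qpath_def)
qed

lemma unc_ptail: "C.qp (w, as) \<Longrightarrow> unc (ptail t' (w, as)) = ptail t (unc w, as)"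
  by (cases "as = []") (auto simp: ptail_def qpath_def unc_t intro!: unc_t)

definition D :: "('v \<times> 'a list \<Rightarrow> 'k) \<Rightarrow> ('v cut_vertex \<times> 'a list \<Rightarrow> 'k)" where
  "D f = (\<lambda>p. if C.qp p then f (unc (fst p), snd p) else 0)"

lemma D_carrier:
  assumes f: "f \<in> carrier R"
  shows "D f \<in> carrier C.R"
proof -
  let ?S = "{p. f p \<noteq> 0}"
  have "{p. D f p \<noteq> 0} \<subseteq> (\<lambda>p. (Plain (fst p), snd p)) ` ?S \<union> (\<lambda>p. (Sharp (fst p), snd p)) ` ?S
      \<union> (\<lambda>p. (Flat (fst p), snd p)) ` ?S"
  proof
    fix p assume "p \<in> {p. D f p \<noteq> 0}"
    then have nz: "f (unc (fst p), snd p) \<noteq> 0" by (auto simp: D_def split: if_splits)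
    obtain w as where p: "p = (w, as)" by (cases p)
    show "p \<in> (\<lambda>p. (Plain (fst p), snd p)) ` ?S \<union> (\<lambda>p. (Sharp (fst p), snd p)) ` ?S
      \<union> (\<lambda>p. (Flat (fst p), snd p)) ` ?S"
      using nz p by (cases w) (auto intro: image_eqI[of _ _ "(unc w, as)"])
  qed
  moreover have "finite ((\<lambda>p. (Plain (fst p), snd p)) ` ?S \<union> (\<lambda>p. (Sharp (fst p), snd p)) ` ?S
      \<union> (\<lambda>p. (Flat (fst p), snd p)) ` ?S)" using carr_finite[OF f] by simp
  ultimately have "finite {p. D f p \<noteq> 0}" by (rule finite_subset)
  moreover have "C.qp p" if "D f p \<noteq> 0" for p using that by (auto simp: D_def split: if_splits)
  ultimately show ?thesis unfolding C.carrier_R by blast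
qed

lemma D_add: "D (f \<oplus>\<^bsub>R\<^esub> g) = D f \<oplus>\<^bsub>C.R\<^esub> D g"
  by (auto simp: D_def add_R C.add_R)

lemma D_one: "D \<one>\<^bsub>R\<^esub> = \<one>\<^bsub>C.R\<^esub>"
  by (rule ext) (auto simp: D_def one_R C.one_R qpath_def cv_unc)

lemma D_scalar: "D (scalar_elem V c) = scalar_elem CV c"
  by (rule ext) (auto simp: D_def scalar_elem_def qpath_def cv_unc)

lemma D_mult:
  assumes f: "f \<in> carrier R" and g: "g \<in> carrier R"
  shows "D (f \<otimes>\<^bsub>R\<^esub> g) = D f \<otimes>\<^bsub>C.R\<^esub> D g"
proof (rule ext)
  fix p :: "'v cut_vertex \<times> 'a list"
  obtain w as where p: "p = (w, as)" by (cases p)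
  show "D (f \<otimes>\<^bsub>R\<^esub> g) p = (D f \<otimes>\<^bsub>C.R\<^esub> D g) p"
  proof (cases "C.qp p")
    case False
    then show ?thesis by (simp add: D_def C.mult_nonqp)
  next
    case True
    have "D (f \<otimes>\<^bsub>R\<^esub> g) p = conv f g (unc w, as)" using True p by (simp add: D_def mult_eq[OF f g])
    also have "\<dots> = C.conv (D f) (D g) (w, as)"
      unfolding conv_def C.conv_def fst_conv snd_conv
    proof (rule sum.cong)
      fix i assume "i \<in> {..length as}"
      then have i: "i \<le> length as" by simp
      have q1: "C.qp (w, take i as)" using C.qp_take True p i by simp
      have q2: "C.qp (ptail t' (w, take i as), drop i as)" using C.qp_drop True p i by simp
      show "f (unc w, take i as) * ptwist \<sigma> (take i as) (g (ptail t (unc w, take i as), drop i as)) =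
          D f (w, take i as) * ptwist \<sigma> (take i as) (D g (ptail t' (w, take i as), drop i as))"
        using q1 q2 unc_ptail[OF q1] by (simp add: D_def)
    qed simp
    also have "\<dots> = (D f \<otimes>\<^bsub>C.R\<^esub> D g) p"
      using p C.mult_eq[OF D_carrier[OF f] D_carrier[OF g]] by simp
    finally show ?thesis .
  qed
qed

lemma D_hom: "D \<in> ring_hom R C.R"
  by (rule ring_hom_memI) (auto simp: D_carrier mult_closed D_mult D_add D_one)

lemma D_zero_iff:
  assumes f: "f \<in> carrier R"
  shows "D f = \<zero>\<^bsub>C.R\<^esub> \<longleftrightarrow> (\<forall>p. admissible_path V A h t Z p \<longrightarrow> f p = 0)"
proof
  assume D0: "D f = \<zero>\<^bsub>C.R\<^esub>"
  show "\<forall>p. admissible_path V A h t Z p \<longrightarrow> f p = 0"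
  proof (intro allI impI)
    fix p assume ad: "admissible_path V A h t Z p"
    obtain v as where p: "p = (v, as)" by (cases p)
    show "f p = 0"
    proof (cases "as = []")
      case True
      then have "v \<in> V" using ad p by (simp add: admissible_path_def qpath_def)
      then obtain w where w: "w \<in> CV" "unc w = v" using cv_ex by blast
      have "C.qp (w, [])" using w by (simp add: qpath_def)
      then have "D f (w, []) = f p" using p True w by (simp add: D_def)
      then show ?thesis using D0 by (simp add: C.zero_R)
    next
      case False
      have "D f (h' (hd as), as) = f p" using adm_cqp[OF ad[unfolded p] False] p by (simp add: D_def)
      then show ?thesis using D0 by (simp add: C.zero_R)
    qed
  qed
next
  assume "\<forall>p. admissible_path V A h t Z p \<longrightarrow> f p = 0"
  then show "D f = \<zero>\<^bsub>C.R\<^esub>"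
    using cqp_adm by (auto simp: D_def C.zero_R)
qed

lemma D_hom_ring: "ring_hom_ring R C.R D"
  using ring_hom_ring.intro[OF is_ring C.is_ring] D_hom unfolding ring_hom_ring_axioms_def by blast

abbreviation "I \<equiv> genideal R (relation_elems h Z)"

lemma rel_carrier: "relation_elems h Z \<subseteq> carrier R"
  using Zsub unfolding relation_elems_def
  by (auto intro!: path_elem_carrier simp: qpath_def)

lemma I_ideal: "ideal I R"
  using ring.genideal_ideal[OF is_ring rel_carrier] .

lemma ker_eq: "a_kernel R C.R D = I"
proof
  have kid: "ideal (a_kernel R C.R D) R" using ring_hom_ring.kernel_is_ideal[OF D_hom_ring] .
  have "relation_elems h Z \<subseteq> a_kernel R C.R D"
  proof
    fix x :: "'v \<times> 'a list \<Rightarrow> 'k" assume x: "x \<in> relation_elems h Z"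
    then obtain b a where ba: "(b, a) \<in> Z" "x = path_elem (h b, [b, a])" unfolding relation_elems_def by auto
    have xc: "x \<in> carrier R" using x rel_carrier by auto
    have "\<not> admissible_path V A h t Z (h b, [b, a])" using ba by (auto simp: admissible_path_def)
    then have "\<forall>p. admissible_path V A h t Z p \<longrightarrow> x p = 0" using ba by (auto simp: path_elem_def)
    then show "x \<in> a_kernel R C.R D" using D_zero_iff[OF xc] xc by (simp add: a_kernel_def')
  qed
  then show "I \<subseteq> a_kernel R C.R D" using ring.genideal_minimal[OF is_ring kid] by blast
next
  have main: "\<forall>x::'v \<times> 'a list \<Rightarrow> 'k. x \<in> carrier R \<and> {p. x p \<noteq> 0} \<subseteq> S \<and> (\<forall>p. admissible_path V A h t Z p \<longrightarrow> x p = 0) \<longrightarrow> x \<in> I"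
    if "finite S" for S
    using that
  proof (induct S rule: finite_induct)
    case empty
    show ?case
    proof (intro allI impI)
      fix x assume "x \<in> carrier R \<and> {p. x p \<noteq> 0} \<subseteq> {} \<and> (\<forall>p. admissible_path V A h t Z p \<longrightarrow> x p = 0)"
      then have "x = \<zero>\<^bsub>R\<^esub>" by (auto simp: zero_R)
      then show "x \<in> I" using additive_subgroup.zero_closed[OF ideal.axioms(1)[OF I_ideal]] by simp
    qed
  next
    case (insert q S)
    show ?case
    proof (intro allI impI)
      fix x assume asm: "x \<in> carrier R \<and> {p. x p \<noteq> 0} \<subseteq> insert q S \<and> (\<forall>p. admissible_path V A h t Z p \<longrightarrow> x p = 0)"
      then have xc: "x \<in> carrier R" by simp
      define y where "y = (\<lambda>p. if p = q then 0 else x p)"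
      define z where "z = (\<lambda>p. if p = q then x q else (0::'k))"
      have yc: "y \<in> carrier R"
      proof -
        have "{p. y p \<noteq> 0} \<subseteq> {p. x p \<noteq> 0}" by (auto simp: y_def)
        then have "finite {p. y p \<noteq> 0}" using carr_finite[OF xc] finite_subset by blast
        moreover have "qp p" if "y p \<noteq> 0" for p using that carr_qp[OF xc] by (auto simp: y_def split: if_splits)
        ultimately show ?thesis unfolding carrier_R by blast
      qed
      have "{p. y p \<noteq> 0} \<subseteq> S" using asm by (auto simp: y_def)
      moreover have "\<forall>p. admissible_path V A h t Z p \<longrightarrow> y p = 0" using asm by (auto simp: y_def)
      ultimately have "y \<in> I" using insert(3) yc by blast
      moreover have "z \<in> I"
      proof (cases "x q = 0")
        case True
        then have "z = \<zero>\<^bsub>R\<^esub>" by (auto simp: z_def zero_R)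
        then show ?thesis using additive_subgroup.zero_closed[OF ideal.axioms(1)[OF I_ideal]] by simp
      next
        case False
        have qq: "qp q" using carr_qp[OF xc False] .
        have "\<not> admissible_path V A h t Z q" using asm False by blast
        then obtain i where i: "Suc i < length (snd q)" "(snd q ! i, snd q ! Suc i) \<in> Z"
          using qq by (auto simp: admissible_path_def)
        have "path_elem q \<in> I"
          using nonadm_in_ideal[OF I_ideal ring.genideal_self[OF is_ring rel_carrier] qq i] .
        then have "scalar_elem V (x q) \<otimes>\<^bsub>R\<^esub> path_elem q \<in> I"
          using ideal.I_l_closed[OF I_ideal _ scalar_carrier] by blast
        moreover have "scalar_elem V (x q) \<otimes>\<^bsub>R\<^esub> path_elem q = z"
          using scalar_path_mult[OF qq] by (auto simp: z_def)
        ultimately show ?thesis by simp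
      qed
      ultimately have "y \<oplus>\<^bsub>R\<^esub> z \<in> I"
        using additive_subgroup.a_closed[OF ideal.axioms(1)[OF I_ideal]] by blast
      moreover have "y \<oplus>\<^bsub>R\<^esub> z = x" by (auto simp: add_R y_def z_def)
      ultimately show "x \<in> I" by simp
    qed
  qed
  show "a_kernel R C.R D \<subseteq> I"
  proof
    fix x assume "x \<in> a_kernel R C.R D"
    then have xc: "x \<in> carrier R" and "D x = \<zero>\<^bsub>C.R\<^esub>" by (auto simp: a_kernel_def')
    then have "\<forall>p. admissible_path V A h t Z p \<longrightarrow> x p = 0" using D_zero_iff by blast
    then show "x \<in> I" using main[OF carr_finite[OF xc]] xc by blast
  qed
qed

lemma final:
  "\<exists>\<Delta>. \<Delta> \<in> ring_hom (R Quot I) C.R \<and> inj_on \<Delta> (carrier (R Quot I))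
     \<and> (\<forall>c::'k. \<Delta> (I +>\<^bsub>R\<^esub> scalar_elem V c) = scalar_elem CV c)"
proof (intro exI conjI allI)
  show "(\<lambda>X. the_elem (D ` X)) \<in> ring_hom (R Quot I) C.R"
    using ring_hom_ring.the_elem_hom[OF D_hom_ring] ker_eq by simp
  show "inj_on (\<lambda>X. the_elem (D ` X)) (carrier (R Quot I))"
    using ring_hom_ring.the_elem_inj[OF D_hom_ring] ker_eq unfolding inj_on_def by simp
  fix c :: 'k
  show "the_elem (D ` (I +>\<^bsub>R\<^esub> scalar_elem V c)) = scalar_elem CV c"
    using ring_hom_ring.the_elem_simp[OF D_hom_ring scalar_carrier[of c]] ker_eq D_scalar by simp
qed

end

theorem lemma5p21:
  fixes V :: "'v set" and A :: "'a set" and h t :: "'a \<Rightarrow> 'v"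
    and Z :: "('a \<times> 'a) set" and \<sigma> :: "'a \<Rightarrow> 'k::division_ring \<Rightarrow> 'k"
    and h' t' :: "'a \<Rightarrow> 'v cut_vertex"
  assumes "gentle_pair V A h t Z"
    and "\<forall>a\<in>A. ring_automorphism (\<sigma> a)"
    and "is_cut_reattachment A h t Z h' t'"
  shows "\<exists>\<Delta>. \<Delta> \<in> ring_hom (bound_semilinear_algebra V A h t \<sigma> Z)
                        (semilinear_path_algebra (cut_vertices V h t Z) A h' t' \<sigma>)
          \<and> inj_on \<Delta> (carrier (bound_semilinear_algebra V A h t \<sigma> Z))
          \<and> (\<forall>c::'k. \<Delta> (bound_scalar V A h t \<sigma> Z c) = scalar_elem (cut_vertices V h t Z) c)"
proof -
  have lg: "locally_gentle V A h t Z" and fa: "finite {p. admissible_path V A h t Z p}"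
    using assms(1) by (auto simp: gentle_pair_def)
  have "(\<lambda>v. (v, [])) ` V \<subseteq> {p. admissible_path V A h t Z p}"
    by (auto simp: admissible_path_def qpath_def)
  then have "finite ((\<lambda>v. (v, ([] :: 'a list))) ` V)" using fa finite_subset by blast
  then have finV: "finite V" by (rule finite_imageD) (simp add: inj_on_def)
  interpret E: excision V A h t \<sigma> Z h' t'
    using finV lg assms(2,3) unfolding locally_gentle_def by unfold_locales auto
  show ?thesis using E.final unfolding bound_semilinear_algebra_def bound_scalar_def by simp
qed

end
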